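(* Let $V$ be a finite-dimensional vector space over a field of characteristic $\neq2$ and let $\mathcal S\subseteq V$. Let $\mathcal H'\neq\mathcal H''$ be two distinct linear hyperplanes of $V$ such that $\mathcal S'=\mathcal S\cap\mathcal H'$ is perfect in $\mathcal H'$ and $\mathcal S''=\mathcal S\cap\mathcal H''$ is perfect in $\mathcal H''$. Suppose moreover that $\mathcal S\setminus(\mathcal S'\cup\mathcal S'')$ is non-empty. Then $\mathcal S$ is perfect in $V$.
   Context: A subset $\mathcal P$ of a vector space $W$ of finite dimension $n$ over a field of characteristic $\neq2$ is perfect (in $W$) if $\{v\otimes v\}_{v\in\mathcal P}$ spans the $\binom{n+1}{2}$-dimensional space of all symmetric tensors in $W\otimes W$. *)

theory Defs
  imports "HOL-Analysis.Analysis"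
begin

text \<open>Vectors of an n-dimensional space over a field 'a are 'a^'n; tensors in
  V \<otimes> V are represented in coordinates as 'a^('n \<times> 'n).\<close>

definition tensor :: "'a::field ^ 'n::finite \<Rightarrow> 'a ^ 'n \<Rightarrow> 'a ^ ('n \<times> 'n)" where
  "tensor v w = (\<chi> p. v $ fst p * w $ snd p)"

definition tswap :: "'a::field ^ ('n::finite \<times> 'n) \<Rightarrow> 'a ^ ('n \<times> 'n)" where
  "tswap T = (\<chi> p. T $ (snd p, fst p))"

text \<open>The symmetric tensors of W \<otimes> W, for a subspace W of V (W \<otimes> W viewed inside V \<otimes> V).\<close>
definition sym_tensors :: "('a::field ^ 'n::finite) set \<Rightarrow> ('a ^ ('n \<times> 'n)) set" where
  "sym_tensors W = {T \<in> vec.span {tensor w w' | w w'. w \<in> W \<and> w' \<in> W}. tswap T = T}"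

definition perfect_in :: "('a::field ^ 'n::finite) set \<Rightarrow> ('a ^ 'n) set \<Rightarrow> bool" where
  "perfect_in P W \<longleftrightarrow> P \<subseteq> W \<and> vec.span {tensor v v | v. v \<in> P} = sym_tensors W"

definition linear_hyperplane :: "('a::field ^ 'n::finite) set \<Rightarrow> bool" where
  "linear_hyperplane H \<longleftrightarrow> vec.subspace H \<and> vec.dim H = CARD('n) - 1"

end

theory Submission
  imports Defs
begin

lemma tswap_add: "tswap (x + y) = tswap x + tswap y"
  by (simp add: tswap_def vec_eq_iff)
lemma tswap_scale: "tswap (c *s x) = c *s tswap x"
  by (simp add: tswap_def vec_eq_iff)
lemma tswap_zero: "tswap 0 = 0"
  by (simp add: tswap_def vec_eq_iff)
lemma tswap_tensor: "tswap (tensor a b) = tensor b a"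
  by (simp add: tswap_def tensor_def vec_eq_iff mult.commute)

lemma sym_tensors_subspace: "vec.subspace (sym_tensors W)"
  unfolding vec.subspace_def sym_tensors_def
  by (auto simp: tswap_add tswap_scale tswap_zero vec.span_zero vec.span_add vec.span_scale)

lemma sym_in_sym_tensors:
  assumes "a \<in> W" "b \<in> W"
  shows "tensor a b + tensor b a \<in> sym_tensors W"
proof -
  have "tensor a b \<in> vec.span {tensor w w' | w w'. w \<in> W \<and> w' \<in> W}"
    by (rule vec.span_base) (use assms in blast)
  moreover have "tensor b a \<in> vec.span {tensor w w' | w w'. w \<in> W \<and> w' \<in> W}"
    by (rule vec.span_base) (use assms in blast)
  ultimately show ?thesis unfolding sym_tensors_def
    by (auto simp: tswap_add tswap_tensor intro: vec.span_add)
qed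

theorem proposition2p3:
  fixes S H' H'' :: "('a::field ^ 'n::finite) set"
  assumes "(2::'a) \<noteq> 0"
    and "linear_hyperplane H'" and "linear_hyperplane H''" and "H' \<noteq> H''"
    and "perfect_in (S \<inter> H') H'" and "perfect_in (S \<inter> H'') H''"
    and "S - ((S \<inter> H') \<union> (S \<inter> H'')) \<noteq> {}"
  shows "perfect_in S UNIV"
proof -
  define A where "A = vec.span {tensor v v | v. v \<in> S}"
  define sy where "sy = (\<lambda>x y. tensor x y + tensor y x :: 'a ^ ('n \<times> 'n))"
  have sA: "vec.subspace A" unfolding A_def by (rule vec.subspace_span)
  have symA1: "sy a b \<in> A" if "a \<in> H'" "b \<in> H'" for a b
  proof -
    have "sym_tensors H' = vec.span {tensor v v |v. v \<in> S \<inter> H'}"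
      using assms(5) unfolding perfect_in_def by auto
    also have "\<dots> \<subseteq> A" unfolding A_def by (rule vec.span_mono) blast
    finally have "sym_tensors H' \<subseteq> A" .
    then show ?thesis using sym_in_sym_tensors[OF that] sy_def by auto
  qed
  have symA2: "sy a b \<in> A" if "a \<in> H''" "b \<in> H''" for a b
  proof -
    have "sym_tensors H'' = vec.span {tensor v v |v. v \<in> S \<inter> H''}"
      using assms(6) unfolding perfect_in_def by auto
    also have "\<dots> \<subseteq> A" unfolding A_def by (rule vec.span_mono) blast
    finally have "sym_tensors H'' \<subseteq> A" .
    then show ?thesis using sym_in_sym_tensors[OF that] sy_def by auto
  qed
  obtain v0 where v0: "v0 \<in> S" "v0 \<notin> H'" "v0 \<notin> H''" using assms(7) by blast
  have v0A: "tensor v0 v0 \<in> A" unfolding A_def using v0 by (auto intro!: vec.span_base)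
  have sub': "vec.subspace H'" and sub'': "vec.subspace H''"
    using assms(2,3) unfolding linear_hyperplane_def by auto
  have decomp: "\<exists>k. x - k *s v0 \<in> H" if H: "linear_hyperplane H" "v0 \<notin> H" for H x
  proof -
    have sH: "vec.subspace H" using H unfolding linear_hyperplane_def by auto
    have "vec.span H = H" using sH by simp
    have "v0 \<notin> vec.span H" by (subst \<open>vec.span H = H\<close>) (rule H(2))
    hence "vec.dim (insert v0 H) = CARD('n)"
      using H by (simp add: vec.dim_insert linear_hyperplane_def)
    hence "vec.span (insert v0 H) = UNIV"
      using vec.dim_eq_full[of "insert v0 H"] by (simp add: card_cart_basis vec.dimension_def)
    hence "x \<in> vec.span (insert v0 H)" by simp
    then obtain k where "x - k *s v0 \<in> vec.span H" using vec.span_breakdown_eq by blast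
    thus ?thesis using \<open>vec.span H = H\<close> by auto
  qed
  obtain w where w: "w \<in> H'" "w \<notin> H''"
  proof -
    have "\<not> H' \<subseteq> H''"
      using vec.subspace_dim_equal[OF sub' sub''] assms(2,3,4)
      unfolding linear_hyperplane_def by auto
    thus ?thesis using that by blast
  qed
  have tA: "tensor h h \<in> A" if "h \<in> H'" for h
  proof -
    have "sy h h \<in> A" using symA1 that by auto
    hence "(1/2) *s sy h h \<in> A" unfolding A_def by (rule vec.span_scale)
    moreover have "(1/2) *s sy h h = tensor h h"
      using assms(1) by (simp add: sy_def vec_eq_iff field_simps)
    ultimately show ?thesis by simp
  qed
  have tA2: "tensor h h \<in> A" if "h \<in> H''" for h
  proof -
    have "sy h h \<in> A" using symA2 that by auto
    hence "(1/2) *s sy h h \<in> A" unfolding A_def by (rule vec.span_scale)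
    moreover have "(1/2) *s sy h h = tensor h h"
      using assms(1) by (simp add: sy_def vec_eq_iff field_simps)
    ultimately show ?thesis by simp
  qed
  have step2: "sy h v0 \<in> A" if "h \<in> H'" "c \<noteq> 0" "h - c *s v0 \<in> H''" for h c
  proof -
    define m where "m = h - c *s v0"
    have "(1/c) *s (tensor h h - tensor m m + (c*c) *s tensor v0 v0) \<in> A"
      using that unfolding m_def
      by (intro vec.subspace_scale[OF sA] vec.subspace_add[OF sA] vec.subspace_diff[OF sA] tA tA2 v0A) auto
    moreover have "(1/c) *s (tensor h h - tensor m m + (c*c) *s tensor v0 v0) = sy h v0"
      using that(2) by (simp add: m_def sy_def tensor_def vec_eq_iff field_simps)
    ultimately show ?thesis by simp
  qed
  have step3: "sy h v0 \<in> A" if "h \<in> H'" for h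
  proof -
    obtain c where c: "h - c *s v0 \<in> H''" using decomp[OF assms(3) v0(3)] by blast
    show ?thesis
    proof (cases "c = 0")
      case False thus ?thesis using step2 that c by blast
    next
      case True
      obtain c' where c': "w - c' *s v0 \<in> H''" using decomp[OF assms(3) v0(3)] by blast
      have "c' \<noteq> 0" using c' w by auto
      have hw: "h + w \<in> H'" using that w sub' vec.subspace_add by blast
      have "(h + w) - c' *s v0 = (h - c *s v0) + (w - c' *s v0)" using True by simp
      hence "(h + w) - c' *s v0 \<in> H''" using vec.subspace_add[OF sub'' c c'] by (simp only:)
      hence "sy (h+w) v0 \<in> A" using step2 hw \<open>c' \<noteq> 0\<close> by blast
      moreover have "sy w v0 \<in> A" using step2 w c' \<open>c' \<noteq> 0\<close> by blast
      ultimately have "sy (h+w) v0 - sy w v0 \<in> A" unfolding A_def by (rule vec.span_diff)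
      moreover have "sy (h+w) v0 - sy w v0 = sy h v0"
        by (simp add: sy_def tensor_def vec_eq_iff algebra_simps)
      ultimately show ?thesis by simp
    qed
  qed
  have step4: "sy x y \<in> A" for x y
  proof -
    obtain a where a: "x - a *s v0 \<in> H'" using decomp[OF assms(2) v0(2)] by blast
    obtain b where b: "y - b *s v0 \<in> H'" using decomp[OF assms(2) v0(2)] by blast
    define h where "h = x - a *s v0"
    define k where "k = y - b *s v0"
    have "sy h k + b *s sy h v0 + a *s sy k v0 + (2*a*b) *s tensor v0 v0 \<in> A"
      using a b unfolding h_def[symmetric] k_def[symmetric]
      by (intro vec.subspace_scale[OF sA] vec.subspace_add[OF sA] symA1 step3 v0A)
    moreover have "sy h k + b *s sy h v0 + a *s sy k v0 + (2*a*b) *s tensor v0 v0 = sy x y"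
      by (simp add: h_def k_def sy_def tensor_def vec_eq_iff algebra_simps)
    ultimately show ?thesis by simp
  qed
  have basis_tensor: "tensor (axis i (1::'a)) (axis j 1) $ q = (if q = (i,j) then 1 else 0)" for i j :: 'n and q
    by (cases q) (auto simp: tensor_def axis_def)
  have symT: "T \<in> A" if "tswap T = T" for T
  proof -
    define E where "E = (\<lambda>p::'n\<times>'n. sy (axis (fst p) (1::'a)) (axis (snd p) 1))"
    have "(\<Sum>p\<in>UNIV. (T $ p) *s E p) \<in> A"
      unfolding A_def by (intro vec.span_sum vec.span_scale) (use step4 in \<open>simp add: A_def E_def\<close>)
    hence "(1/2) *s (\<Sum>p\<in>UNIV. (T $ p) *s E p) \<in> A" unfolding A_def by (rule vec.span_scale)
    moreover have "(1/2) *s (\<Sum>p\<in>UNIV. (T $ p) *s E p) = T"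
    proof -
      have "(\<Sum>p\<in>UNIV. (T $ p) *s E p) $ q = T $ q + T $ q" for q
      proof -
        have e: "E p $ q = (if p = q then 1 else 0) + (if p = (snd q, fst q) then 1 else 0)" for p
        proof -
          have "E p $ q = (if q = (fst p, snd p) then 1 else 0) + (if q = (snd p, fst p) then 1 else 0)"
            unfolding E_def sy_def by (simp only: vector_add_component basis_tensor)
          moreover have "(q = (fst p, snd p)) = (p = q)" "(q = (snd p, fst p)) = (p = (snd q, fst q))"
            by (cases p, cases q, auto)+
          ultimately show ?thesis by simp
        qed
        have "(\<Sum>p\<in>UNIV. (T $ p) *s E p) $ q = (\<Sum>p\<in>UNIV. T $ p * E p $ q)"
          by (simp add: sum_component)
        also have "\<dots> = (\<Sum>p\<in>UNIV. (if p = q then T $ p else 0))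
                    + (\<Sum>p\<in>UNIV. (if p = (snd q, fst q) then T $ p else 0))"
        proof -
          have "T $ p * E p $ q = (if p = q then T $ p else 0) + (if p = (snd q, fst q) then T $ p else 0)" for p
            unfolding e by (simp add: distrib_left)
          thus ?thesis by (simp only: sum.distrib)
        qed
        also have "\<dots> = T $ q + T $ (snd q, fst q)" by simp
        also have "T $ (snd q, fst q) = T $ q"
        proof -
          have "tswap T $ q = T $ (snd q, fst q)" by (simp add: tswap_def)
          thus ?thesis using that by simp
        qed
        finally show ?thesis .
      qed
      thus ?thesis using assms(1) by (simp add: vec_eq_iff field_simps)
    qed
    ultimately show ?thesis by simp
  qed
  have "A = sym_tensors UNIV"
  proof
    show "A \<subseteq> sym_tensors UNIV"
      unfolding A_def
      by (rule vec.span_minimal[OF _ sym_tensors_subspace])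
        (auto simp: sym_tensors_def tswap_tensor intro!: vec.span_base)
    show "sym_tensors UNIV \<subseteq> A" using symT unfolding sym_tensors_def by auto
  qed
  thus ?thesis unfolding perfect_in_def A_def by simp
qed

end
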